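(* Let $(A_1,\dots,A_n)$ and $(B_1,\dots,B_m)$ be nonempty sequences of words, and let $(g_1,\dots,g_r)$ and $(h_1,\dots,h_t)$ be the $n$-bounded, respectively $m$-bounded, index collections maximal for them. Let $k=\max(\{0\}\cup\{i\mid 1\le i\le r,\ B_{h_1}\precsim A_{g_i}\})$. Then the $(n+m)$-bounded index collection $(g_1,\dots,g_k,n+h_1,\dots,n+h_t)$ is maximal for the sequence $(A_1,\dots,A_n,B_1,\dots,B_m)$.
   Context: Words are finite strings over $\mathbb{N}$; $\Lambda$ is the empty word. For $k\in\mathbb{N}$, $\mathsf{S}_k$ is the set of words all of whose symbols are $\ge k$. Given a linear preorder $\precsim$ with $A\sim B$ iff $A\precsim B\wedge B\precsim A$ and $A\prec B$ iff $A\precsim B\wedge\neg B\precsim A$, a finite sequence $(A_1,\dots,A_p)$ is lexicographically not greater than $(B_1,\dots,B_q)$ iff either $p\le q$ and $A_i\sim B_i$ for all $i\le p$, or there is $s<\min(p,q)$ with $A_i\sim B_i$ for $i\le s$ and $A_{s+1}\prec B_{s+1}$. A lexicographically maximal subsequence of a finite sequence is a subsequence that is lexicographically not less than every subsequence. The linear preorder $\precsim$ on words is defined by recursion on (largest symbol of $AB$) $-$ (smallest symbol of $AB$): $\Lambda\precsim\Lambda$; if $AB$ is nonempty with minimal symbol $n$, write uniquely $A=A_1n\cdots nA_k$, $B=B_1n\cdots nB_l$ ($k,l\ge1$) with $A_i,B_j\in\mathsf{S}_{n+1}$ (possibly empty); let $C,D$ be lexicographically maximal subsequences of $(A_1,\dots,A_k)$,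 $(B_1,\dots,B_l)$; then $A\precsim B$ iff $C$ is lexicographically not greater than $D$. An index collection is a strictly increasing finite sequence of positive integers; it is $n$-bounded if all entries are $\le n$; it is maximal for $(A_1,\dots,A_n)$ if $(A_{s_1},\dots,A_{s_m})$ is a lexicographically maximal subsequence of $(A_1,\dots,A_n)$. For a nonempty sequence there is exactly one maximal index collection. *)

theory Defs
  imports Main "HOL-Library.Sublist"
begin

definition pequiv :: "('a \<Rightarrow> 'a \<Rightarrow> bool) \<Rightarrow> 'a \<Rightarrow> 'a \<Rightarrow> bool" where
  "pequiv le a b \<longleftrightarrow> le a b \<and> le b a"

definition pstrict :: "('a \<Rightarrow> 'a \<Rightarrow> bool) \<Rightarrow> 'a \<Rightarrow> 'a \<Rightarrow> bool" where
  "pstrict le a b \<longleftrightarrow> le a b \<and> \<not> le b a"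

definition lex_le :: "('a \<Rightarrow> 'a \<Rightarrow> bool) \<Rightarrow> 'a list \<Rightarrow> 'a list \<Rightarrow> bool" where
  "lex_le le xs ys \<longleftrightarrow>
     (length xs \<le> length ys \<and> (\<forall>i<length xs. pequiv le (xs ! i) (ys ! i))) \<or>
     (\<exists>s<min (length xs) (length ys).
        (\<forall>i<s. pequiv le (xs ! i) (ys ! i)) \<and> pstrict le (xs ! s) (ys ! s))"

definition lex_max_subseq :: "('a \<Rightarrow> 'a \<Rightarrow> bool) \<Rightarrow> 'a list \<Rightarrow> 'a list \<Rightarrow> bool" where
  "lex_max_subseq le C xs \<longleftrightarrow> subseq C xs \<and> (\<forall>D. subseq D xs \<longrightarrow> lex_le le D C)"

text \<open>Splitting a word at every occurrence of the symbol n: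
  A = A_1 n A_2 n ... n A_k, giving [A_1, ..., A_k] (k \<ge> 1).\<close>
fun split_sym :: "nat \<Rightarrow> nat list \<Rightarrow> nat list list" where
  "split_sym n [] = [[]]"
| "split_sym n (x # xs) =
     (let r = split_sym n xs in if x = n then [] # r else (x # hd r) # tl r)"

text \<open>The preorder on words, by recursion with a fuel parameter; the fuel
  length (A @ B) always suffices since all pieces compared are strictly shorter.\<close>
fun wle :: "nat \<Rightarrow> nat list \<Rightarrow> nat list \<Rightarrow> bool" where
  "wle 0 A B = True"
| "wle (Suc f) A B =
     (if A @ B = [] then True
      else (let n = Min (set (A @ B)); P = split_sym n A; Q = split_sym n B in
            \<forall>C D. lex_max_subseq (wle f) C P \<longrightarrow> lex_max_subseq (wle f) D Q \<longrightarrow>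
                   lex_le (wle f) C D))"

definition word_le :: "nat list \<Rightarrow> nat list \<Rightarrow> bool" where
  "word_le A B = wle (length (A @ B)) A B"

text \<open>Index collections (1-based indices).\<close>
definition index_collection :: "nat list \<Rightarrow> bool" where
  "index_collection s \<longleftrightarrow> sorted_wrt (<) s \<and> (\<forall>x\<in>set s. 0 < x)"

definition bounded_ic :: "nat \<Rightarrow> nat list \<Rightarrow> bool" where
  "bounded_ic n s \<longleftrightarrow> index_collection s \<and> (\<forall>x\<in>set s. x \<le> n)"

definition maximal_ic :: "('a \<Rightarrow> 'a \<Rightarrow> bool) \<Rightarrow> nat list \<Rightarrow> 'a list \<Rightarrow> bool" where
  "maximal_ic le s As \<longleftrightarrow> bounded_ic (length As) s \<and>
     lex_max_subseq le (map (\<lambda>i. As ! (i - 1)) s) As"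

end

theory Submission
  imports Defs
begin

lemma lex_le_Nil[simp]: "lex_le le [] ys"
  by (simp add: lex_le_def)

lemma lex_le_Cons_Nil[simp]: "\<not> lex_le le (x#xs) []"
  by (simp add: lex_le_def)

lemma lex_le_Cons_Cons[simp]:
  "lex_le le (x#xs) (y#ys) = (pstrict le x y \<or> (pequiv le x y \<and> lex_le le xs ys))"
proof -
  have e1: "(length (x#xs) \<le> length (y#ys) \<and> (\<forall>i<length (x#xs). pequiv le ((x#xs) ! i) ((y#ys) ! i)))
    = (pequiv le x y \<and> (length xs \<le> length ys \<and> (\<forall>i<length xs. pequiv le (xs ! i) (ys ! i))))"
    by (auto simp: less_Suc_eq_0_disj)
  have e2: "(\<exists>s<min (length (x#xs)) (length (y#ys)).
        (\<forall>i<s. pequiv le ((x#xs) ! i) ((y#ys) ! i)) \<and> pstrict le ((x#xs) ! s) ((y#ys) ! s))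
    = (pstrict le x y \<or> (pequiv le x y \<and> (\<exists>s<min (length xs) (length ys).
        (\<forall>i<s. pequiv le (xs ! i) (ys ! i)) \<and> pstrict le (xs ! s) (ys ! s))))"
  proof
    assume "\<exists>s<min (length (x#xs)) (length (y#ys)).
        (\<forall>i<s. pequiv le ((x#xs) ! i) ((y#ys) ! i)) \<and> pstrict le ((x#xs) ! s) ((y#ys) ! s)"
    then obtain s where s: "s<min (length (x#xs)) (length (y#ys))"
      "\<forall>i<s. pequiv le ((x#xs) ! i) ((y#ys) ! i)" "pstrict le ((x#xs) ! s) ((y#ys) ! s)" by blast
    show "pstrict le x y \<or> (pequiv le x y \<and> (\<exists>s<min (length xs) (length ys).
        (\<forall>i<s. pequiv le (xs ! i) (ys ! i)) \<and> pstrict le (xs ! s) (ys ! s)))"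
    proof (cases s)
      case 0 then show ?thesis using s by simp
    next
      case (Suc t)
      have "pequiv le x y" using s(2) Suc by (metis nth_Cons_0 zero_less_Suc)
      moreover have "\<forall>i<t. pequiv le (xs ! i) (ys ! i)" using s(2) Suc by auto
      ultimately show ?thesis using s Suc by auto
    qed
  next
    assume "pstrict le x y \<or> (pequiv le x y \<and> (\<exists>s<min (length xs) (length ys).
        (\<forall>i<s. pequiv le (xs ! i) (ys ! i)) \<and> pstrict le (xs ! s) (ys ! s)))"
    then show "\<exists>s<min (length (x#xs)) (length (y#ys)).
        (\<forall>i<s. pequiv le ((x#xs) ! i) ((y#ys) ! i)) \<and> pstrict le ((x#xs) ! s) ((y#ys) ! s)"
    proof
      assume "pstrict le x y" then show ?thesis by (intro exI[of _ 0]) auto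
    next
      assume "pequiv le x y \<and> (\<exists>s<min (length xs) (length ys).
        (\<forall>i<s. pequiv le (xs ! i) (ys ! i)) \<and> pstrict le (xs ! s) (ys ! s))"
      then obtain s where "pequiv le x y" "s<min (length xs) (length ys)"
        "\<forall>i<s. pequiv le (xs ! i) (ys ! i)" "pstrict le (xs ! s) (ys ! s)" by blast
      then show ?thesis by (intro exI[of _ "Suc s"]) (auto simp: less_Suc_eq_0_disj)
    qed
  qed
  show ?thesis unfolding lex_le_def e1 e2 by blast
qed

definition tp_on :: "'a set \<Rightarrow> ('a \<Rightarrow> 'a \<Rightarrow> bool) \<Rightarrow> bool" where
  "tp_on S le \<longleftrightarrow> (\<forall>x\<in>S. le x x) \<and> (\<forall>x\<in>S. \<forall>y\<in>S. le x y \<or> le y x) \<and>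
     (\<forall>x\<in>S. \<forall>y\<in>S. \<forall>z\<in>S. le x y \<longrightarrow> le y z \<longrightarrow> le x z)"

lemma tp_refl: "tp_on S le \<Longrightarrow> x \<in> S \<Longrightarrow> le x x"
  unfolding tp_on_def by blast
lemma tp_total: "tp_on S le \<Longrightarrow> x \<in> S \<Longrightarrow> y \<in> S \<Longrightarrow> \<not> le x y \<Longrightarrow> le y x"
  unfolding tp_on_def by blast
lemma tp_trans: "tp_on S le \<Longrightarrow> x \<in> S \<Longrightarrow> y \<in> S \<Longrightarrow> z \<in> S \<Longrightarrow> le x y \<Longrightarrow> le y z \<Longrightarrow> le x z"
  unfolding tp_on_def by blast

lemma subseq_set: "subseq xs ys \<Longrightarrow> set xs \<subseteq> set ys"
  by (induction rule: list_emb.induct) auto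

lemma lex_le_refl: "\<forall>x\<in>set xs. le x x \<Longrightarrow> lex_le le xs xs"
  by (induction xs) (auto simp: pequiv_def)

lemma lex_le_total:
  "tp_on S le \<Longrightarrow> set xs \<subseteq> S \<Longrightarrow> set ys \<subseteq> S \<Longrightarrow> lex_le le xs ys \<or> lex_le le ys xs"
proof (induction xs arbitrary: ys)
  case Nil then show ?case by simp
next
  case (Cons x xs)
  show ?case
  proof (cases ys)
    case Nil then show ?thesis by simp
  next
    case (Cons y ys')
    then have "x \<in> S" "y \<in> S" "set xs \<subseteq> S" "set ys' \<subseteq> S" using Cons.prems by auto
    then have "le x y \<or> le y x" "lex_le le xs ys' \<or> lex_le le ys' xs"
      using Cons.IH[OF Cons.prems(1)] tp_total[OF Cons.prems(1)] by blast+
    then show ?thesis using Cons by (auto simp: pequiv_def pstrict_def)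
  qed
qed

lemma lex_le_trans:
  "tp_on S le \<Longrightarrow> set xs \<subseteq> S \<Longrightarrow> set ys \<subseteq> S \<Longrightarrow> set zs \<subseteq> S \<Longrightarrow>
   lex_le le xs ys \<Longrightarrow> lex_le le ys zs \<Longrightarrow> lex_le le xs zs"
proof (induction xs arbitrary: ys zs)
  case Nil then show ?case by simp
next
  case (Cons x xs)
  then obtain y ys' where y: "ys = y # ys'" by (cases ys) auto
  with Cons obtain z zs' where z: "zs = z # zs'" by (cases zs) auto
  have xyz: "x \<in> S" "y \<in> S" "z \<in> S" using Cons.prems y z by auto
  have tr: "\<And>a b c. a \<in> S \<Longrightarrow> b \<in> S \<Longrightarrow> c \<in> S \<Longrightarrow> le a b \<Longrightarrow> le b c \<Longrightarrow> le a c"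
    using Cons.prems(1) unfolding tp_on_def by blast
  have ih: "lex_le le xs ys' \<Longrightarrow> lex_le le ys' zs' \<Longrightarrow> lex_le le xs zs'"
    using Cons y z by auto
  have trs: "le x y \<Longrightarrow> le y z \<Longrightarrow> le x z" "le z x \<Longrightarrow> le x y \<Longrightarrow> le z y"
    "le y z \<Longrightarrow> le z x \<Longrightarrow> le y x" "le x z \<Longrightarrow> le z y \<Longrightarrow> le x y"
    "le y x \<Longrightarrow> le x z \<Longrightarrow> le y z" "le z y \<Longrightarrow> le y x \<Longrightarrow> le z x"
    using tr xyz by blast+
  have p1: "pstrict le x y \<or> (pequiv le x y \<and> lex_le le xs ys')" using Cons.prems(5) y by simp
  have p2: "pstrict le y z \<or> (pequiv le y z \<and> lex_le le ys' zs')" using Cons.prems(6) y z by simp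
  have "pstrict le x z \<or> (pequiv le x z \<and> lex_le le xs zs')"
  proof (cases "pstrict le x y")
    case True
    then have "pstrict le x z" using p2 trs unfolding pstrict_def pequiv_def by blast
    then show ?thesis by blast
  next
    case False
    then have xy: "pequiv le x y" "lex_le le xs ys'" using p1 by auto
    show ?thesis
    proof (cases "pstrict le y z")
      case True
      then have "pstrict le x z" using xy trs unfolding pstrict_def pequiv_def by blast
      then show ?thesis by blast
    next
      case False
      then have yz: "pequiv le y z" "lex_le le ys' zs'" using p2 by auto
      then have "pequiv le x z" using xy trs unfolding pequiv_def by blast
      then show ?thesis using ih xy yz by blast
    qed
  qed
  then show ?case using z by simp
qed

fun sm :: "('a \<Rightarrow> 'a \<Rightarrow> bool) \<Rightarrow> 'a list \<Rightarrow> 'a list" where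
  "sm le [] = []"
| "sm le (x#xs) = (if \<forall>y\<in>set xs. le y x then x # sm le xs else sm le xs)"

lemma sm_subseq: "subseq (sm le xs) xs"
  by (induction xs) auto

lemma sm_set: "set (sm le xs) \<subseteq> set xs"
  by (induction xs) auto

lemma sm_hd:
  "tp_on S le \<Longrightarrow> set xs \<subseteq> S \<Longrightarrow> xs \<noteq> [] \<Longrightarrow> sm le xs \<noteq> [] \<and> (\<forall>y\<in>set xs. le y (hd (sm le xs)))"
proof (induction xs)
  case Nil then show ?case by simp
next
  case (Cons x xs)
  show ?case
  proof (cases "\<forall>y\<in>set xs. le y x")
    case True
    have "le x x" using Cons.prems tp_refl by auto
    then show ?thesis using True by auto
  next
    case False
    then obtain y where y: "y \<in> set xs" "\<not> le y x" by blast
    then have ne: "xs \<noteq> []" by auto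
    have xsS: "set xs \<subseteq> S" using Cons.prems by auto
    have ih: "sm le xs \<noteq> []" "\<forall>y\<in>set xs. le y (hd (sm le xs))"
      using Cons.IH[OF Cons.prems(1) xsS ne] by auto
    have hS: "hd (sm le xs) \<in> S" using hd_in_set[OF ih(1)] sm_set[of le xs] xsS by blast
    have yS: "y \<in> S" "x \<in> S" using y Cons.prems by auto
    have "le x y" using y yS tp_total[OF Cons.prems(1)] by blast
    then have "le x (hd (sm le xs))" using ih y hS yS tp_trans[OF Cons.prems(1)] by blast
    then show ?thesis using False ih by auto
  qed
qed

lemma sm_lexmax:
  assumes "tp_on S le" "set xs \<subseteq> S"
  shows "lex_max_subseq le (sm le xs) xs"
proof -
  have "\<forall>D. subseq D xs \<longrightarrow> lex_le le D (sm le xs)"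
    using assms(2)
  proof (induction xs)
    case Nil then show ?case using list_emb_Nil2 by fastforce
  next
    case (Cons x xs)
    have xsS: "set xs \<subseteq> S" and xS: "x \<in> S" using Cons.prems by auto
    have ih: "\<forall>D. subseq D xs \<longrightarrow> lex_le le D (sm le xs)" using Cons.IH xsS by blast
    show ?case
    proof (intro allI impI)
      fix D assume D: "subseq D (x#xs)"
      show "lex_le le D (sm le (x#xs))"
      proof (cases "\<forall>y\<in>set xs. le y x")
        case True
        have "lex_le le D (x # sm le xs)"
        proof (cases "D = []")
          case True then show ?thesis by simp
        next
          case False
          then obtain d D'' where dD: "D = d # D''" by (cases D) auto
          have xx: "le x x" using xS tp_refl[OF assms(1)] by blast
          show ?thesis
          proof (cases "d = x")
            case True
            then have "subseq D'' xs" using D dD by simp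
            then have "lex_le le D'' (sm le xs)" using ih by blast
            then show ?thesis using True dD xx by (simp add: pequiv_def)
          next
            case False
            then have "subseq D xs" using D dD subseq_Cons2_neq[of d D'' x xs] by simp
            then have "d \<in> set xs" "subseq D'' xs" using dD subseq_set[of D xs] subseq_Cons'[of d D'' xs]
              by auto
            then have "le d x" "lex_le le D'' (sm le xs)" using True ih by auto
            then show ?thesis using dD by (auto simp: pequiv_def pstrict_def)
          qed
        qed
        then show ?thesis using True by simp
      next
        case False
        then obtain y where y: "y \<in> set xs" "\<not> le y x" by blast
        have ne: "xs \<noteq> []" using y by auto
        have hh: "sm le xs \<noteq> []" "\<forall>y\<in>set xs. le y (hd (sm le xs))"
          using sm_hd[OF assms(1) xsS ne] by auto
        have hS: "hd (sm le xs) \<in> S" using hd_in_set[OF hh(1)] sm_set[of le xs] xsS by blast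
        have yS: "y \<in> S" using xsS y by auto
        have xy: "le x y" using y xS yS tp_total[OF assms(1)] by blast
        have yh: "le y (hd (sm le xs))" using hh y by auto
        have xh: "le x (hd (sm le xs))" using tp_trans[OF assms(1) xS yS hS xy yh] .
        have "\<not> le (hd (sm le xs)) x"
          using tp_trans[OF assms(1) yS hS xS yh] y(2) by blast
        then have s: "pstrict le x (hd (sm le xs))" using xh unfolding pstrict_def by blast
        have "lex_le le D (sm le xs)"
        proof (cases "subseq D xs")
          case True then show ?thesis using ih by auto
        next
          case False
          have "D \<noteq> []" using False by auto
          then obtain d D'' where dD: "D = d # D''" by (cases D) auto
          have "d = x"
          proof (rule ccontr)
            assume "d \<noteq> x"
            then have "subseq D xs" using subseq_Cons2_neq[of d D'' x xs] D dD by simp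
            then show False using False by simp
          qed
          then have "D = x # D''" using dD by simp
          then show ?thesis using s hh(1) by (cases "sm le xs") auto
        qed
        moreover have "sm le (x#xs) = sm le xs" by (simp only: sm.simps if_not_P[OF False])
        ultimately show ?thesis by simp
      qed
    qed
  qed
  then show ?thesis by (simp add: lex_max_subseq_def sm_subseq)
qed

lemma split_sym_ne[simp]: "split_sym n A \<noteq> []"
  by (induction A) (auto simp: Let_def)

lemma split_sym_notin: "n \<notin> set A \<Longrightarrow> split_sym n A = [A]"
  by (induction A) (auto simp: Let_def)

lemma split_len: "sum_list (map length (split_sym n A)) + length (filter ((=) n) A) = length A"
proof (induction A)
  case Nil then show ?case by simp
next
  case (Cons x A)
  have ne: "split_sym n A \<noteq> []" by simp
  show ?case
  proof (cases "x = n")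
    case True then show ?thesis using Cons by (simp add: Let_def)
  next
    case False
    obtain r rs where r: "split_sym n A = r # rs" using ne by (cases "split_sym n A") auto
    show ?thesis using Cons False r by (simp add: Let_def)
  qed
qed

lemma wle_refl: "wle f X X"
proof (cases f)
  case 0 then show ?thesis by simp
next
  case (Suc g)
  have "\<forall>C D. lex_max_subseq (wle g) C P \<longrightarrow> lex_max_subseq (wle g) D P \<longrightarrow> lex_le (wle g) C D" for P
    unfolding lex_max_subseq_def by blast
  then show ?thesis unfolding Suc by (simp add: Let_def)
qed

lemma word_le_refl: "word_le X X"
  by (simp add: word_le_def wle_refl)

lemma sum_set_le_sum_list:
  fixes f :: "'a \<Rightarrow> nat"
  shows "X \<subseteq> set W \<Longrightarrow> sum f X \<le> sum_list (map f W)"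
proof (induction W arbitrary: X)
  case Nil then show ?case by simp
next
  case (Cons w W)
  have fin: "finite X" using Cons.prems finite_subset by blast
  have "X - {w} \<subseteq> set W" using Cons.prems by auto
  then have ih: "sum f (X - {w}) \<le> sum_list (map f W)" using Cons.IH by blast
  have "sum f X \<le> f w + sum f (X - {w})"
  proof (cases "w \<in> X")
    case True then show ?thesis using sum.remove[OF fin True, of f] by simp
  next
    case False then show ?thesis by simp
  qed
  then show ?case using ih by simp
qed

lemma two_le_sum_list:
  fixes f :: "'a \<Rightarrow> nat"
  assumes "a \<in> set W" "b \<in> set W" "a \<noteq> b"
  shows "f a + f b \<le> sum_list (map f W)"
proof -
  have "sum f {a, b} \<le> sum_list (map f W)" using assms by (intro sum_set_le_sum_list) auto
  then show ?thesis using assms by simp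
qed

lemma three_le_sum_list:
  fixes f :: "'a \<Rightarrow> nat"
  assumes "a \<in> set W" "b \<in> set W" "c \<in> set W" "a \<noteq> b" "a \<noteq> c" "b \<noteq> c"
  shows "f a + f b + f c \<le> sum_list (map f W)"
proof -
  have "sum f {a, b, c} \<le> sum_list (map f W)" using assms by (intro sum_set_le_sum_list) auto
  then show ?thesis using assms by simp
qed

lemma lex_le_cong:
  assumes "\<forall>a\<in>S. \<forall>b\<in>S. le1 a b = le2 a b"
  shows "set xs \<subseteq> S \<Longrightarrow> set ys \<subseteq> S \<Longrightarrow> lex_le le1 xs ys = lex_le le2 xs ys"
proof (induction xs arbitrary: ys)
  case Nil then show ?case by simp
next
  case (Cons x xs)
  show ?case
  proof (cases ys)
    case Nil then show ?thesis by simp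
  next
    case (Cons y ys')
    then have xy: "x \<in> S" "y \<in> S" "set xs \<subseteq> S" "set ys' \<subseteq> S" using Cons.prems by auto
    have e: "le1 x y = le2 x y" "le1 y x = le2 y x" using xy assms by blast+
    have e2: "lex_le le1 xs ys' = lex_le le2 xs ys'" using Cons.IH xy by blast
    show ?thesis unfolding Cons lex_le_Cons_Cons pstrict_def pequiv_def e e2 ..
  qed
qed

lemma lexmax_cong:
  assumes "\<forall>a\<in>S. \<forall>b\<in>S. le1 a b = le2 a b" "set P \<subseteq> S"
  shows "lex_max_subseq le1 C P = lex_max_subseq le2 C P"
proof -
  have h: "lex_le le1 D C = lex_le le2 D C" if a: "subseq D P" and b: "subseq C P" for D
  proof -
    have "set D \<subseteq> S" using subseq_set[OF a] assms(2) by (rule subset_trans)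
    moreover have "set C \<subseteq> S" using subseq_set[OF b] assms(2) by (rule subset_trans)
    ultimately show ?thesis by (rule lex_le_cong[OF assms(1)])
  qed
  show ?thesis unfolding lex_max_subseq_def
  proof (intro iffI)
    assume "subseq C P \<and> (\<forall>D. subseq D P \<longrightarrow> lex_le le1 D C)"
    then show "subseq C P \<and> (\<forall>D. subseq D P \<longrightarrow> lex_le le2 D C)" using h by simp
  next
    assume "subseq C P \<and> (\<forall>D. subseq D P \<longrightarrow> lex_le le2 D C)"
    then show "subseq C P \<and> (\<forall>D. subseq D P \<longrightarrow> lex_le le1 D C)" using h by simp
  qed
qed

lemma inner_cong:
  assumes "\<forall>a\<in>set P \<union> set Q. \<forall>b\<in>set P \<union> set Q. le1 a b = le2 a b"
  shows "(\<forall>C D. lex_max_subseq le1 C P \<longrightarrow> lex_max_subseq le1 D Q \<longrightarrow> lex_le le1 C D) =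
         (\<forall>C D. lex_max_subseq le2 C P \<longrightarrow> lex_max_subseq le2 D Q \<longrightarrow> lex_le le2 C D)"
proof -
  have m1: "lex_max_subseq le1 C P = lex_max_subseq le2 C P" for C
    by (rule lexmax_cong[OF assms]) auto
  have m2: "lex_max_subseq le1 D Q = lex_max_subseq le2 D Q" for D
    by (rule lexmax_cong[OF assms]) auto
  have l: "lex_le le1 C D = lex_le le2 C D"
    if a: "lex_max_subseq le2 C P" and b: "lex_max_subseq le2 D Q" for C D
  proof -
    have "set C \<subseteq> set P \<union> set Q" using a subseq_set unfolding lex_max_subseq_def by blast
    moreover have "set D \<subseteq> set P \<union> set Q" using b subseq_set unfolding lex_max_subseq_def by blast
    ultimately show ?thesis by (rule lex_le_cong[OF assms])
  qed
  show ?thesis unfolding m1 m2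
  proof (intro iffI allI impI)
    fix C D assume "\<forall>C D. lex_max_subseq le2 C P \<longrightarrow> lex_max_subseq le2 D Q \<longrightarrow> lex_le le1 C D"
      "lex_max_subseq le2 C P" "lex_max_subseq le2 D Q"
    then show "lex_le le2 C D" using l by blast
  next
    fix C D assume "\<forall>C D. lex_max_subseq le2 C P \<longrightarrow> lex_max_subseq le2 D Q \<longrightarrow> lex_le le2 C D"
      "lex_max_subseq le2 C P" "lex_max_subseq le2 D Q"
    then show "lex_le le1 C D" using l by blast
  qed
qed

lemma inner_sm:
  assumes "tp_on S le" "set P \<subseteq> S" "set Q \<subseteq> S"
  shows "(\<forall>C D. lex_max_subseq le C P \<longrightarrow> lex_max_subseq le D Q \<longrightarrow> lex_le le C D)
       = lex_le le (sm le P) (sm le Q)"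
proof
  assume "\<forall>C D. lex_max_subseq le C P \<longrightarrow> lex_max_subseq le D Q \<longrightarrow> lex_le le C D"
  then show "lex_le le (sm le P) (sm le Q)"
    using sm_lexmax[OF assms(1,2)] sm_lexmax[OF assms(1,3)] by blast
next
  assume a: "lex_le le (sm le P) (sm le Q)"
  show "\<forall>C D. lex_max_subseq le C P \<longrightarrow> lex_max_subseq le D Q \<longrightarrow> lex_le le C D"
  proof (intro allI impI)
    fix C D assume C: "lex_max_subseq le C P" and D: "lex_max_subseq le D Q"
    have c1: "lex_le le C (sm le P)" using sm_lexmax[OF assms(1,2)] C
      unfolding lex_max_subseq_def by simp
    have d1: "lex_le le (sm le Q) D" using sm_lexmax[OF assms(1,3)] D
      unfolding lex_max_subseq_def by simp
    have "subseq C P" using C unfolding lex_max_subseq_def by blast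
    then have sC: "set C \<subseteq> S" using assms(2) by (rule subset_trans[OF subseq_set])
    have "subseq D Q" using D unfolding lex_max_subseq_def by blast
    then have sD: "set D \<subseteq> S" using assms(3) by (rule subset_trans[OF subseq_set])
    have sP: "set (sm le P) \<subseteq> S" using sm_set assms(2) by (rule subset_trans)
    have sQ: "set (sm le Q) \<subseteq> S" using sm_set assms(3) by (rule subset_trans)
    have "lex_le le C (sm le Q)" using lex_le_trans[OF assms(1) sC sP sQ c1 a] .
    then show "lex_le le C D" using lex_le_trans[OF assms(1) sC sQ sD _ d1] by blast
  qed
qed

lemma Min_in_cnt:
  assumes "A @ B \<noteq> []"
  shows "1 \<le> length (filter ((=) (Min (set (A @ B)))) (A @ B))"
proof -
  have "Min (set (A @ B)) \<in> set (A @ B)" using assms by (intro Min_in) auto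
  then have "filter ((=) (Min (set (A @ B)))) (A @ B) \<noteq> []"
    unfolding filter_empty_conv by blast
  then show ?thesis by (cases "filter ((=) (Min (set (A @ B)))) (A @ B)") auto
qed

lemma pieces_bound:
  assumes "A @ B \<noteq> []" "n = Min (set (A @ B))"
    "a \<in> set (split_sym n A @ split_sym n B)" "b \<in> set (split_sym n A @ split_sym n B)" "a \<noteq> b"
  shows "length a + length b < length (A @ B)"
proof -
  have "length a + length b \<le> sum_list (map length (split_sym n A @ split_sym n B))"
    using two_le_sum_list[OF assms(3,4,5)] .
  moreover have "sum_list (map length (split_sym n A @ split_sym n B)) + length (filter ((=) n) (A @ B))
      = length (A @ B)" using split_len[of n A] split_len[of n B] by simp
  moreover have "1 \<le> length (filter ((=) n) (A @ B))" using Min_in_cnt[OF assms(1)] assms(2) by simp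
  ultimately show ?thesis by linarith
qed

lemma fuel_step: "\<forall>A B. length (A @ B) \<le> f \<longrightarrow> wle (Suc f) A B = wle f A B"
proof (induction f)
  case 0 then show ?case by simp
next
  case (Suc f)
  show ?case
  proof (intro allI impI)
    fix A B :: "nat list" assume len: "length (A @ B) \<le> Suc f"
    show "wle (Suc (Suc f)) A B = wle (Suc f) A B"
    proof (cases "A @ B = []")
      case True then show ?thesis by simp
    next
      case False
      define n where "n = Min (set (A @ B))"
      define P where "P = split_sym n A"
      define Q where "Q = split_sym n B"
      have agree: "\<forall>a\<in>set P \<union> set Q. \<forall>b\<in>set P \<union> set Q. wle (Suc f) a b = wle f a b"
      proof (intro ballI)
        fix a b assume a: "a \<in> set P \<union> set Q" and b: "b \<in> set P \<union> set Q"
        show "wle (Suc f) a b = wle f a b"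
        proof (cases "a = b")
          case True then show ?thesis by (simp add: wle_refl)
        next
          case False
          have "length a + length b < length (A @ B)"
            using pieces_bound[OF \<open>A @ B \<noteq> []\<close> n_def _ _ False] a b unfolding P_def Q_def by simp
          then have "length (a @ b) \<le> f" using len by simp
          then show ?thesis using Suc.IH by blast
        qed
      qed
      have e1: "wle (Suc (Suc f)) A B = (\<forall>C D. lex_max_subseq (wle (Suc f)) C P \<longrightarrow>
          lex_max_subseq (wle (Suc f)) D Q \<longrightarrow> lex_le (wle (Suc f)) C D)"
        by (simp only: wle.simps Let_def if_not_P[OF False] n_def P_def Q_def)
      have e2: "wle (Suc f) A B = (\<forall>C D. lex_max_subseq (wle f) C P \<longrightarrow>
          lex_max_subseq (wle f) D Q \<longrightarrow> lex_le (wle f) C D)"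
        by (simp only: wle.simps Let_def if_not_P[OF False] n_def P_def Q_def)
      show ?thesis unfolding e1 e2 by (rule inner_cong[OF agree])
    qed
  qed
qed

lemma word_le_eq_aux: "wle (length (A @ B) + d) A B = word_le A B"
proof (induction d)
  case 0 then show ?case by (simp add: word_le_def)
next
  case (Suc d)
  have "wle (Suc (length (A @ B) + d)) A B = wle (length (A @ B) + d) A B"
    using fuel_step by simp
  then show ?case using Suc by simp
qed

lemma word_le_eq: "length (A @ B) \<le> f \<Longrightarrow> wle f A B = word_le A B"
  using word_le_eq_aux[of A B "f - length (A @ B)"] by simp

lemma sm_single[simp]: "sm le [x] = [x]"
  by simp

lemma L:
  assumes m: "\<forall>s\<in>set (x @ y). m \<le> s" and tp: "tp_on S word_le"
    and sub: "set (split_sym m x) \<union> set (split_sym m y) \<subseteq> S"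
  shows "word_le x y = lex_le word_le (sm word_le (split_sym m x)) (sm word_le (split_sym m y))"
proof (cases "m \<in> set (x @ y)")
  case False
  then have "split_sym m x = [x]" "split_sym m y = [y]" using split_sym_notin by auto
  then show ?thesis by (auto simp: pequiv_def pstrict_def)
next
  case True
  have ne: "x @ y \<noteq> []" using True by auto
  have mM: "m = Min (set (x @ y))"
    using True m by (intro Min_eqI[symmetric]) auto
  obtain f where f: "length (x @ y) = Suc f" using ne by (cases "length (x @ y)") auto
  define P where "P = split_sym m x"
  define Q where "Q = split_sym m y"
  have agree: "\<forall>a\<in>set P \<union> set Q. \<forall>b\<in>set P \<union> set Q. wle f a b = word_le a b"
  proof (intro ballI)
    fix a b assume a: "a \<in> set P \<union> set Q" and b: "b \<in> set P \<union> set Q"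
    show "wle f a b = word_le a b"
    proof (cases "a = b")
      case True then show ?thesis by (simp add: wle_refl word_le_refl)
    next
      case False
      have "length a + length b < length (x @ y)"
        using pieces_bound[OF ne mM _ _ False] a b unfolding P_def Q_def by simp
      then have "length (a @ b) \<le> f" using f by simp
      then show ?thesis by (rule word_le_eq)
    qed
  qed
  have "word_le x y = wle (Suc f) x y" unfolding word_le_def f ..
  also have "\<dots> = (\<forall>C D. lex_max_subseq (wle f) C P \<longrightarrow>
          lex_max_subseq (wle f) D Q \<longrightarrow> lex_le (wle f) C D)"
    using ne by (simp only: wle.simps Let_def if_not_P[OF ne] mM P_def Q_def if_False)
  also have "\<dots> = (\<forall>C D. lex_max_subseq word_le C P \<longrightarrow>
          lex_max_subseq word_le D Q \<longrightarrow> lex_le word_le C D)"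
    by (rule inner_cong[OF agree])
  also have "\<dots> = lex_le word_le (sm word_le P) (sm word_le Q)"
    using sub unfolding P_def Q_def by (intro inner_sm[OF tp]) auto
  finally show ?thesis unfolding P_def Q_def .
qed

definition IHP :: "nat \<Rightarrow> bool" where
  "IHP N \<longleftrightarrow> (\<forall>x y z. length x + length y + length z < N \<longrightarrow>
     (word_le x y \<or> word_le y x) \<and> (word_le x y \<longrightarrow> word_le y z \<longrightarrow> word_le x z))"

lemma tp_from_IH:
  assumes ih: "IHP N" and s: "sum_list (map length W) < N"
  shows "tp_on (set W) word_le"
  unfolding tp_on_def
proof (intro conjI ballI impI)
  fix a assume "a \<in> set W" then show "word_le a a" using word_le_refl by blast
next
  fix a b assume a: "a \<in> set W" and b: "b \<in> set W"
  show "word_le a b \<or> word_le b a"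
  proof (cases "a = b")
    case True then show ?thesis by (simp add: word_le_refl)
  next
    case False
    have "length a + length b + length ([]::nat list) < N"
      using two_le_sum_list[OF a b False, of length] s by simp
    then show ?thesis using ih unfolding IHP_def by blast
  qed
next
  fix a b c assume a: "a \<in> set W" and b: "b \<in> set W" and c: "c \<in> set W"
    and ab: "word_le a b" and bc: "word_le b c"
  show "word_le a c"
  proof (cases "a = b \<or> b = c \<or> a = c")
    case True then show ?thesis using ab bc word_le_refl by auto
  next
    case False
    then have "length a + length b + length c < N"
      using three_le_sum_list[of a W b c length] a b c s by auto
    then show ?thesis using ih ab bc unfolding IHP_def by blast
  qed
qed

lemma cnt_pos: "(ws::nat list) \<noteq> [] \<Longrightarrow> 0 < length (filter ((=) (Min (set ws))) ws)"
  using Min_in_cnt[of ws "[]"] by (simp del: length_greater_0_conv)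

lemma IHP_all: "IHP N"
proof (induction N)
  case 0 then show ?case unfolding IHP_def by simp
next
  case (Suc N)
  show ?case unfolding IHP_def
  proof (intro allI impI)
    fix x y z :: "nat list" assume len: "length x + length y + length z < Suc N"
    have tot: "word_le x y \<or> word_le y x"
    proof (cases "x @ y = []")
      case True then show ?thesis by (simp add: word_le_refl)
    next
      case False
      define m where "m = Min (set (x @ y))"
      define W where "W = split_sym m x @ split_sym m y"
      have c: "0 < length (filter ((=) m) (x @ y))" using cnt_pos[OF False] m_def by simp
      have "sum_list (map length W) + length (filter ((=) m) (x @ y)) = length x + length y"
        using split_len[of m x] split_len[of m y] unfolding W_def by simp
      then have "sum_list (map length W) < N" using c len by linarith
      then have tp: "tp_on (set W) word_le" by (rule tp_from_IH[OF Suc.IH])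
      have mle: "\<forall>s\<in>set (x @ y). m \<le> s" "\<forall>s\<in>set (y @ x). m \<le> s"
        unfolding m_def using False by auto
      have L1: "word_le x y = lex_le word_le (sm word_le (split_sym m x)) (sm word_le (split_sym m y))"
        by (rule L[OF mle(1) tp]) (auto simp: W_def)
      have L2: "word_le y x = lex_le word_le (sm word_le (split_sym m y)) (sm word_le (split_sym m x))"
        by (rule L[OF mle(2) tp]) (auto simp: W_def)
      have s1: "set (sm word_le (split_sym m x)) \<subseteq> set W" using sm_set unfolding W_def by fastforce
      have s2: "set (sm word_le (split_sym m y)) \<subseteq> set W" using sm_set unfolding W_def by fastforce
      show ?thesis unfolding L1 L2 by (rule lex_le_total[OF tp s1 s2])
    qed
    have trn: "word_le x y \<longrightarrow> word_le y z \<longrightarrow> word_le x z"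
    proof (cases "x @ y @ z = []")
      case True then show ?thesis by (simp add: word_le_refl)
    next
      case False
      define m where "m = Min (set (x @ y @ z))"
      define W where "W = split_sym m x @ split_sym m y @ split_sym m z"
      have c: "0 < length (filter ((=) m) (x @ y @ z))" using cnt_pos[OF False] m_def by simp
      have "sum_list (map length W) + length (filter ((=) m) (x @ y @ z)) = length x + length y + length z"
        using split_len[of m x] split_len[of m y] split_len[of m z] unfolding W_def by simp
      then have "sum_list (map length W) < N" using c len by linarith
      then have tp: "tp_on (set W) word_le" by (rule tp_from_IH[OF Suc.IH])
      have mall: "\<forall>s\<in>set (x @ y @ z). m \<le> s" unfolding m_def using False by auto
      have mle: "\<forall>s\<in>set (x @ y). m \<le> s" "\<forall>s\<in>set (y @ z). m \<le> s" "\<forall>s\<in>set (x @ z). m \<le> s"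
        using mall by auto
      have L1: "word_le x y = lex_le word_le (sm word_le (split_sym m x)) (sm word_le (split_sym m y))"
        by (rule L[OF mle(1) tp]) (auto simp: W_def)
      have L2: "word_le y z = lex_le word_le (sm word_le (split_sym m y)) (sm word_le (split_sym m z))"
        by (rule L[OF mle(2) tp]) (auto simp: W_def)
      have L3: "word_le x z = lex_le word_le (sm word_le (split_sym m x)) (sm word_le (split_sym m z))"
        by (rule L[OF mle(3) tp]) (auto simp: W_def)
      have s1: "set (sm word_le (split_sym m x)) \<subseteq> set W" using sm_set unfolding W_def by fastforce
      have s2: "set (sm word_le (split_sym m y)) \<subseteq> set W" using sm_set unfolding W_def by fastforce
      have s3: "set (sm word_le (split_sym m z)) \<subseteq> set W" using sm_set unfolding W_def by fastforce
      show ?thesis unfolding L1 L2 L3 using lex_le_trans[OF tp s1 s2 s3] by blast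
    qed
    show "(word_le x y \<or> word_le y x) \<and> (word_le x y \<longrightarrow> word_le y z \<longrightarrow> word_le x z)"
      using tot trn by blast
  qed
qed

lemma word_le_total: "word_le x y \<or> word_le y x"
  using IHP_all[of "length x + length y + 1"] unfolding IHP_def
  by (metis add.right_neutral less_add_one list.size(3))

lemma word_le_trans: "word_le x y \<Longrightarrow> word_le y z \<Longrightarrow> word_le x z"
  using IHP_all[of "length x + length y + length z + 1"] unfolding IHP_def by auto

lemma lex_le_prefix:
  "\<forall>p\<in>set P. le p p \<Longrightarrow> lex_le le (P @ X) (P @ Y) = lex_le le X Y"
  by (induction P) (auto simp: pequiv_def pstrict_def)

lemma W_lem:
  assumes "\<forall>t\<in>set T. word_le \<beta> t" "\<forall>b\<in>set Bs. word_le b \<beta>"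
    "\<forall>E. subseq E Bs \<longrightarrow> lex_le word_le E GB"
  shows "subseq DB Bs \<Longrightarrow> lex_le word_le DB (T @ GB)"
  using assms(1)
proof (induction T arbitrary: DB)
  case Nil then show ?case using assms(3) by simp
next
  case (Cons t T')
  note ih = Cons.IH and pr = Cons.prems
  show ?case
  proof (cases "DB = []")
    case True then show ?thesis by simp
  next
    case False
    then obtain d DB' where dd: "DB = d # DB'" by (cases DB) auto
    have "d \<in> set Bs" using subseq_set[OF pr(1)] dd by auto
    then have "word_le d \<beta>" using assms(2) by blast
    moreover have "word_le \<beta> t" using pr(2) by simp
    ultimately have dt: "word_le d t" by (rule word_le_trans)
    have "subseq DB' Bs" using pr(1) dd subseq_Cons'[of d DB' Bs] by simp
    then have "lex_le word_le DB' (T' @ GB)" using ih pr(2) by simp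
    then show ?thesis using dt dd by (auto simp: pequiv_def pstrict_def)
  qed
qed

lemma Z_lem:
  assumes T: "\<forall>t\<in>set T. word_le \<beta> t" and U: "U \<noteq> [] \<Longrightarrow> pstrict word_le (hd U) \<beta>"
    and GB: "GB \<noteq> []" "hd GB = \<beta>" and B: "\<forall>b\<in>set Bs. word_le b \<beta>"
    and M: "\<forall>E. subseq E Bs \<longrightarrow> lex_le word_le E GB"
  shows "lex_le word_le DA (T @ U) \<Longrightarrow> subseq DB Bs \<Longrightarrow> lex_le word_le (DA @ DB) (T @ GB)"
  using T
proof (induction T arbitrary: DA)
  case Nil
  note pr = Nil.prems
  show ?case
  proof (cases "DA = []")
    case True then show ?thesis using M pr by simp
  next
    case False
    then obtain d DA' where dd: "DA = d # DA'" by (cases DA) auto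
    then obtain u U' where u: "U = u # U'" using pr(1) by (cases U) auto
    have du: "word_le d u" using pr(1) dd u by (auto simp: pstrict_def pequiv_def)
    have ub: "word_le u \<beta>" "\<not> word_le \<beta> u" using U u by (auto simp: pstrict_def)
    have "word_le d \<beta>" using du ub(1) by (rule word_le_trans)
    moreover have "\<not> word_le \<beta> d" using word_le_trans[of \<beta> d u] du ub(2) by blast
    ultimately have "pstrict word_le d \<beta>" by (simp add: pstrict_def)
    moreover obtain GB' where "GB = \<beta> # GB'" using GB by (cases GB) auto
    ultimately show ?thesis using dd by simp
  qed
next
  case (Cons t T')
  note ih = Cons.IH and pr = Cons.prems
  show ?case
  proof (cases "DA = []")
    case True then show ?thesis using W_lem[OF pr(3) B M pr(2)] by simp
  next
    case False
    then obtain d DA' where dd: "DA = d # DA'" by (cases DA) auto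
    have "pstrict word_le d t \<or> (pequiv word_le d t \<and> lex_le word_le DA' (T' @ U))"
      using pr(1) dd by simp
    moreover have "lex_le word_le DA' (T' @ U) \<Longrightarrow> lex_le word_le (DA' @ DB) (T' @ GB)"
      using ih pr(2,3) by simp
    ultimately show ?thesis using dd by auto
  qed
qed

lemma lexmax_noninc:
  assumes C: "lex_max_subseq word_le C xs" and ij: "i < j" "j < length C"
  shows "word_le (C ! j) (C ! i)"
proof (rule ccontr)
  assume nle: "\<not> word_le (C ! j) (C ! i)"
  define D where "D = take i C @ drop j C"
  have "subseq (drop j C) (drop i C)"
  proof -
    have "drop j C = drop (j - i) (drop i C)" using ij by simp
    then show ?thesis using suffix_drop[of "j - i" "drop i C"] by (simp add: suffix_imp_subseq)
  qed
  then have "subseq D (take i C @ drop i C)" unfolding D_def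
    by (rule list_emb_append_mono[OF subseq_order.refl])
  then have "subseq D C" by simp
  moreover have "subseq C xs" using C unfolding lex_max_subseq_def by blast
  ultimately have "subseq D xs" by (rule subseq_order.trans)
  then have le: "lex_le word_le D C" using C unfolding lex_max_subseq_def by blast
  have C1: "C = take i C @ (C ! i # drop (Suc i) C)" using ij by (simp add: Cons_nth_drop_Suc)
  have D1: "D = take i C @ (C ! j # drop (Suc j) C)" using ij unfolding D_def by (simp add: Cons_nth_drop_Suc)
  have e: "take i C @ (C ! i # drop (Suc i) C) = C" using C1 by simp
  have "lex_le word_le (take i C @ (C ! j # drop (Suc j) C)) C" using le D1 by simp
  then have "lex_le word_le (take i C @ (C ! j # drop (Suc j) C)) (take i C @ (C ! i # drop (Suc i) C))"
    unfolding e .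
  then have "lex_le word_le (C ! j # drop (Suc j) C) (C ! i # drop (Suc i) C)"
    using lex_le_prefix[of "take i C" word_le] word_le_refl by blast
  then show False using nle by (simp add: pstrict_def pequiv_def)
qed

theorem lemma2:
  fixes As Bs :: "nat list list" and g h :: "nat list" and k :: nat
  assumes "As \<noteq> []" and "Bs \<noteq> []"
    and "bounded_ic (length As) g" and "maximal_ic word_le g As"
    and "bounded_ic (length Bs) h" and "maximal_ic word_le h Bs"
    and "k = Max ({0} \<union> {i. 1 \<le> i \<and> i \<le> length g \<and>
                     word_le (Bs ! (h ! 0 - 1)) (As ! (g ! (i - 1) - 1))})"
  shows "bounded_ic (length As + length Bs) (take k g @ map (\<lambda>j. length As + j) h)
       \<and> maximal_ic word_le (take k g @ map (\<lambda>j. length As + j) h) (As @ Bs)"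
proof -
  define n where "n = length As"
  define GA where "GA = map (\<lambda>i. As ! (i - 1)) g"
  define GB where "GB = map (\<lambda>i. Bs ! (i - 1)) h"
  define K where "K = {i. 1 \<le> i \<and> i \<le> length g \<and> word_le (Bs ! (h ! 0 - 1)) (As ! (g ! (i - 1) - 1))}"
  have kK: "k = Max ({0} \<union> K)" using assms(7) unfolding K_def .
  have mA: "lex_max_subseq word_le GA As" using assms(4) unfolding maximal_ic_def GA_def by blast
  have mB: "lex_max_subseq word_le GB Bs" using assms(6) unfolding maximal_ic_def GB_def by blast
  have MB: "\<forall>E. subseq E Bs \<longrightarrow> lex_le word_le E GB" using mB unfolding lex_max_subseq_def by blast
  have MA: "\<forall>E. subseq E As \<longrightarrow> lex_le word_le E GA" using mA unfolding lex_max_subseq_def by blast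
  have "subseq [hd Bs] Bs" using assms(2) by (simp add: subseq_singleton_left)
  then have "lex_le word_le [hd Bs] GB" using MB by blast
  then have GBne: "GB \<noteq> []" by auto
  then have hne: "h \<noteq> []" unfolding GB_def by simp
  define \<beta> where "\<beta> = Bs ! (h ! 0 - 1)"
  have hdGB: "hd GB = \<beta>" using hne unfolding GB_def \<beta>_def by (cases h) auto
  have Bb: "\<forall>b\<in>set Bs. word_le b \<beta>"
  proof
    fix b assume "b \<in> set Bs"
    then have "lex_le word_le [b] GB" using MB by (simp add: subseq_singleton_left)
    then show "word_le b \<beta>" using GBne hdGB by (cases GB) (auto simp: pstrict_def pequiv_def)
  qed
  have lenGA: "length GA = length g" unfolding GA_def by simp
  have GAi: "i < length g \<Longrightarrow> GA ! i = As ! (g ! i - 1)" for i unfolding GA_def by simp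
  have finK: "finite ({0} \<union> K)" unfolding K_def by (rule finite_subset[of _ "{0..length g}"]) auto
  have kle: "k \<le> length g"
  proof -
    have "\<forall>x\<in>{0} \<union> K. x \<le> length g" unfolding K_def by auto
    then show ?thesis using kK Max_in[OF finK] by auto
  qed
  have Tb: "\<forall>t\<in>set (take k GA). word_le \<beta> t"
  proof
    fix t assume "t \<in> set (take k GA)"
    then obtain i where i: "i < k" "t = GA ! i" using kle lenGA
      by (auto simp: in_set_conv_nth)
    have "k \<in> {0} \<union> K" using kK Max_in[OF finK] by auto
    then have "k \<in> K" using i by auto
    then have kb: "word_le \<beta> (GA ! (k - 1))" unfolding K_def \<beta>_def using GAi[of "k - 1"] by auto
    show "word_le \<beta> t"
    proof (cases "i = k - 1")
      case True then show ?thesis using kb i by simp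
    next
      case False
      then have "word_le (GA ! (k - 1)) (GA ! i)"
        using lexmax_noninc[OF mA, of i "k - 1"] i kle lenGA by simp
      then show ?thesis using kb i word_le_trans by blast
    qed
  qed
  have Ub: "drop k GA \<noteq> [] \<Longrightarrow> pstrict word_le (hd (drop k GA)) \<beta>"
  proof -
    assume "drop k GA \<noteq> []"
    then have kl: "k < length g" using lenGA by simp
    have hd: "hd (drop k GA) = GA ! k" using kl lenGA by (simp add: hd_drop_conv_nth)
    have "Suc k \<notin> K"
    proof
      assume "Suc k \<in> K"
      then have "Suc k \<le> Max ({0} \<union> K)" using finK by (intro Max_ge) auto
      then show False using kK by simp
    qed
    then have "\<not> word_le \<beta> (GA ! k)" unfolding K_def \<beta>_def using kl GAi[of k] by auto
    then show ?thesis unfolding hd pstrict_def using word_le_total by blast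
  qed
  have GAT: "GA = take k GA @ drop k GA" by simp
  have maxC: "\<forall>D. subseq D (As @ Bs) \<longrightarrow> lex_le word_le D (take k GA @ GB)"
  proof (intro allI impI)
    fix D assume "subseq D (As @ Bs)"
    then obtain DA DB where D: "D = DA @ DB" "subseq DA As" "subseq DB Bs"
      by (rule subseq_appendE)
    have "lex_le word_le DA (take k GA @ drop k GA)" using MA D(2) by simp
    then show "lex_le word_le D (take k GA @ GB)"
      using Z_lem[OF Tb Ub GBne hdGB Bb MB] D by blast
  qed
  have subA: "subseq GA As" using mA unfolding lex_max_subseq_def by blast
  have subB: "subseq GB Bs" using mB unfolding lex_max_subseq_def by blast
  have "subseq (take k GA) GA" by (rule prefix_imp_subseq[OF take_is_prefix])
  then have "subseq (take k GA) As" using subA by (rule subseq_order.trans)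
  then have subC: "subseq (take k GA @ GB) (As @ Bs)" using subB by (rule list_emb_append_mono)
  have gb: "\<forall>i\<in>set g. 0 < i \<and> i \<le> n" "sorted_wrt (<) g"
    using assms(3) unfolding bounded_ic_def index_collection_def n_def by auto
  have hb: "\<forall>i\<in>set h. 0 < i \<and> i \<le> length Bs" "sorted_wrt (<) h"
    using assms(5) unfolding bounded_ic_def index_collection_def by auto
  have mapeq: "map (\<lambda>i. (As @ Bs) ! (i - 1)) (take k g @ map (\<lambda>j. length As + j) h) = take k GA @ GB"
  proof -
    have "map (\<lambda>i. (As @ Bs) ! (i - 1)) (take k g) = map (\<lambda>i. As ! (i - 1)) (take k g)"
    proof (rule map_cong[OF refl])
      fix i assume "i \<in> set (take k g)"
      then have "i \<in> set g" by (rule in_set_takeD)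
      then have "i - 1 < length As" using gb n_def by force
      then show "(As @ Bs) ! (i - 1) = As ! (i - 1)" by (simp add: nth_append)
    qed
    also have "\<dots> = take k GA" unfolding GA_def by (simp add: take_map)
    finally have "map (\<lambda>i. (As @ Bs) ! (i - 1)) (take k g) = take k GA" .
    moreover have "map (\<lambda>i. (As @ Bs) ! (i - 1)) (map (\<lambda>j. length As + j) h) = GB"
      unfolding GB_def
    proof (simp only: map_map o_def, rule map_cong[OF refl])
      fix j assume "j \<in> set h"
      then have "0 < j" using hb by auto
      then have e: "length As + j - 1 = length As + (j - 1)" by simp
      show "(As @ Bs) ! (length As + j - 1) = Bs ! (j - 1)"
        using e nth_append_length_plus[of As Bs "j - 1"] by (simp only:)
    qed
    ultimately show ?thesis by simp
  qed
  have bnd: "bounded_ic (length As + length Bs) (take k g @ map (\<lambda>j. length As + j) h)"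
  proof -
    have sg: "sorted_wrt (<) (take k g)" using gb(2) by (rule sorted_wrt_take)
    have sh: "sorted_wrt (<) (map (\<lambda>j. length As + j) h)" using hb(2) by (simp add: sorted_wrt_map)
    have tk: "\<forall>x\<in>set (take k g). 0 < x \<and> x \<le> n"
    proof
      fix x assume "x \<in> set (take k g)"
      then have "x \<in> set g" by (rule in_set_takeD)
      then show "0 < x \<and> x \<le> n" using gb(1) by blast
    qed
    have mh: "\<forall>y\<in>set (map (\<lambda>j. length As + j) h). n < y \<and> y \<le> length As + length Bs"
    proof
      fix y assume "y \<in> set (map (\<lambda>j. length As + j) h)"
      then obtain j where "j \<in> set h" "y = length As + j" by auto
      then show "n < y \<and> y \<le> length As + length Bs" using hb(1) n_def by auto
    qed
    have cross: "\<forall>x\<in>set (take k g). \<forall>y\<in>set (map (\<lambda>j. length As + j) h). x < y"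
    proof (intro ballI)
      fix x y assume "x \<in> set (take k g)" "y \<in> set (map (\<lambda>j. length As + j) h)"
      then have "x \<le> n" "n < y" using tk mh by auto
      then show "x < y" by simp
    qed
    have "sorted_wrt (<) (take k g @ map (\<lambda>j. length As + j) h)"
      unfolding sorted_wrt_append using sg sh cross by blast
    moreover have "\<forall>x\<in>set (take k g @ map (\<lambda>j. length As + j) h). 0 < x \<and> x \<le> length As + length Bs"
    proof
      fix x assume "x \<in> set (take k g @ map (\<lambda>j. length As + j) h)"
      then consider "x \<in> set (take k g)" | "x \<in> set (map (\<lambda>j. length As + j) h)" by auto
      then show "0 < x \<and> x \<le> length As + length Bs"
      proof cases
        case 1 then show ?thesis using tk n_def by fastforce
      next
        case 2 then show ?thesis using mh by fastforce
      qed
    qed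
    ultimately show ?thesis unfolding bounded_ic_def index_collection_def by blast
  qed
  have "lex_max_subseq word_le (take k GA @ GB) (As @ Bs)"
    unfolding lex_max_subseq_def using subC maxC by blast
  then show ?thesis using bnd mapeq unfolding maximal_ic_def by simp
qed

end
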